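(* Let $G$ be a countable group and let $H\triangleleft G$ be a normal subgroup which is a torsion group (every element of $H$ has finite order). Then $G/H$ is algebraically recurrent if and only if $G$ is algebraically recurrent.
   Context: For a countable group $G$ and a probability measure $\mu$ on $G$, a $\mu$-random walk is $X_n=\zeta_1\cdots\zeta_n$ with $\zeta_i$ i.i.d. of law $\mu$. Let $\mathcal{S}_n$ be the semigroup (not subgroup) generated by $\{X_n,X_{n+1},\ldots\}$. The pair $(G,\mu)$ is algebraically recurrent (AR) if for every $n$, $\mathcal{S}_n=G$ almost surely. The group $G$ is AR if $(G,\mu)$ is AR for every symmetric probability measure $\mu$ (i.e. $\mu(g)=\mu(g^{-1})$) whose support generates $G$ as a group. *)

theory Defs
  imports "HOL-Algebra.Algebra" "HOL-Probability.Probability"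
begin

inductive_set semigroup_gen :: "('a, 'b) monoid_scheme \<Rightarrow> 'a set \<Rightarrow> 'a set"
  for G and A
  where
    sg_incl: "a \<in> A \<Longrightarrow> a \<in> semigroup_gen G A"
  | sg_mult: "a \<in> semigroup_gen G A \<Longrightarrow> b \<in> semigroup_gen G A \<Longrightarrow> a \<otimes>\<^bsub>G\<^esub> b \<in> semigroup_gen G A"

text \<open>Random walk: the increments are the stream entries, zeta_(i+1) = w !! i,
  and X_n = zeta_1 ... zeta_n (X_0 = identity).\<close>
primrec rwalk :: "('a, 'b) monoid_scheme \<Rightarrow> 'a stream \<Rightarrow> nat \<Rightarrow> 'a" where
  "rwalk G w 0 = \<one>\<^bsub>G\<^esub>"
| "rwalk G w (Suc n) = rwalk G w n \<otimes>\<^bsub>G\<^esub> (w !! n)"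

text \<open>The i.i.d. increments with law mu are the
  coordinates of the product measure stream_space (measure_pmf mu).\<close>
definition AR_pair :: "('a, 'b) monoid_scheme \<Rightarrow> 'a pmf \<Rightarrow> bool" where
  "AR_pair G \<mu> \<longleftrightarrow>
     (\<forall>n\<ge>1. AE w in stream_space (measure_pmf \<mu>).
        semigroup_gen G {rwalk G w m | m. m \<ge> n} = carrier G)"

definition symmetric_pmf :: "('a, 'b) monoid_scheme \<Rightarrow> 'a pmf \<Rightarrow> bool" where
  "symmetric_pmf G \<mu> \<longleftrightarrow> (\<forall>g\<in>carrier G. pmf \<mu> g = pmf \<mu> (inv\<^bsub>G\<^esub> g))"

definition AR_group :: "('a, 'b) monoid_scheme \<Rightarrow> bool" where
  "AR_group G \<longleftrightarrow>
     (\<forall>\<mu> :: 'a pmf. set_pmf \<mu> \<subseteq> carrier G \<and> symmetric_pmf G \<mu>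
        \<and> generate G (set_pmf \<mu>) = carrier G \<longrightarrow> AR_pair G \<mu>)"

definition torsion_subgroup :: "('a, 'b) monoid_scheme \<Rightarrow> 'a set \<Rightarrow> bool" where
  "torsion_subgroup G H \<longleftrightarrow> (\<forall>h\<in>H. \<exists>n::nat. n > 0 \<and> h [^]\<^bsub>G\<^esub> n = \<one>\<^bsub>G\<^esub>)"

end

theory Submission
  imports Defs
begin


lemma sg_subset:
  assumes "monoid G" "A \<subseteq> carrier G" shows "semigroup_gen G A \<subseteq> carrier G"
proof
  fix x assume "x \<in> semigroup_gen G A" then show "x \<in> carrier G"
    by induct (use assms in \<open>auto intro: monoid.m_closed\<close>)
qed

lemma sg_hom_img:
  assumes "group_hom G K f" "A \<subseteq> carrier G"
  shows "semigroup_gen K (f ` A) = f ` semigroup_gen G A"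
proof
  interpret group_hom G K f by fact
  show "semigroup_gen K (f ` A) \<subseteq> f ` semigroup_gen G A"
  proof
    fix y assume "y \<in> semigroup_gen K (f ` A)" then show "y \<in> f ` semigroup_gen G A"
    proof induct
      case (sg_incl a) then show ?case by (auto intro: semigroup_gen.sg_incl)
    next
      case (sg_mult a b)
      then obtain x1 x2 where "x1 \<in> semigroup_gen G A" "x2 \<in> semigroup_gen G A" "a = f x1" "b = f x2" by auto
      moreover have "x1 \<in> carrier G" "x2 \<in> carrier G" using calculation sg_subset[OF G.monoid_axioms assms(2)] by auto
      ultimately show ?case by (auto intro!: image_eqI[where x="x1 \<otimes>\<^bsub>G\<^esub> x2"] semigroup_gen.sg_mult)
    qed
  qed
  show "f ` semigroup_gen G A \<subseteq> semigroup_gen K (f ` A)"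
  proof
    fix y assume "y \<in> f ` semigroup_gen G A"
    then obtain x where x: "x \<in> semigroup_gen G A" "y = f x" by auto
    from x(1) have "f x \<in> semigroup_gen K (f ` A)"
    proof induct
      case (sg_incl a) then show ?case by (auto intro: semigroup_gen.sg_incl)
    next
      case (sg_mult a b)
      moreover have "a \<in> carrier G" "b \<in> carrier G" using calculation sg_subset[OF G.monoid_axioms assms(2)] by auto
      ultimately show ?case by (auto intro: semigroup_gen.sg_mult)
    qed
    then show "y \<in> semigroup_gen K (f ` A)" using x by simp
  qed
qed

lemma rwalk_carrier:
  assumes "monoid G" "\<forall>i. w !! i \<in> carrier G" shows "rwalk G w m \<in> carrier G"
  by (induct m) (use assms in \<open>auto intro: monoid.m_closed\<close>)

lemma rwalk_hom:
  assumes "group_hom G K f" "\<forall>i. w !! i \<in> carrier G"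
  shows "rwalk K (smap f w) m = f (rwalk G w m)"
proof (induct m)
  case 0 then show ?case using assms(1) by (simp add: group_hom.hom_one)
next
  case (Suc m)
  interpret group_hom G K f by fact
  show ?case using Suc rwalk_carrier[OF G.monoid_axioms assms(2)] assms(2) by simp
qed

lemma (in normal) sg_inv_closed:
  assumes tor: "torsion_subgroup G H"
    and Ssub: "S \<subseteq> carrier G" and Smul: "\<And>a b. a \<in> S \<Longrightarrow> b \<in> S \<Longrightarrow> a \<otimes> b \<in> S"
    and onto: "carrier (G Mod H) \<subseteq> (\<lambda>x. H #> x) ` S"
    and g: "g \<in> S"
  shows "inv g \<in> S"
proof -
  have gc: "g \<in> carrier G" using g Ssub by auto
  have "H #> inv g \<in> carrier (G Mod H)" using gc by (auto simp: carrier_FactGroup)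
  then obtain t where t: "t \<in> S" "H #> t = H #> inv g" using onto by auto
  have tc: "t \<in> carrier G" using t Ssub by auto
  have "t \<in> H #> inv g" using t(2) tc by (metis rcos_self subgroup_axioms)
  then obtain h where h: "h \<in> H" "t = h \<otimes> inv g" unfolding r_coset_def by auto
  have hc: "h \<in> carrier G" using h subset by auto
  define s where "s = g \<otimes> t"
  have sS: "s \<in> S" using g t Smul s_def by auto
  have sH: "s \<in> H" unfolding s_def h(2) using h(1) gc hc
    by (metis inv_closed inv_op_closed2 m_assoc)
  have sc: "s \<in> carrier G" using sS Ssub by auto
  obtain k :: nat where k: "k > 0" "s [^] k = \<one>" using tor sH unfolding torsion_subgroup_def by auto
  have powS: "s [^] (Suc j) \<in> S" for j
    by (induct j) (use sS sc Smul in \<open>auto simp: nat_pow_Suc2\<close>)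
  have invs: "inv s \<in> S \<or> inv s = \<one>"
  proof (cases k)
    case 0 with k show ?thesis by simp
  next
    case (Suc j)
    then have "s [^] j \<otimes> s = \<one>" using k by (simp add: nat_pow_Suc)
    then have "inv s = s [^] j" using sc by (metis inv_equality nat_pow_closed)
    then show ?thesis using powS by (cases j) auto
  qed
  have "inv g = t \<otimes> inv s" unfolding s_def using gc tc
    by (simp add: inv_mult_group m_assoc[symmetric])
  then show ?thesis using invs t(1) Smul tc by auto
qed



lemma (in prob_space) emeasure_scylinder:
  assumes "set As \<subseteq> sets M"
  shows "emeasure (stream_space M) (scylinder (space M) As) = prod_list (map (emeasure M) As)"
  using assms
proof (induct As)
  case Nil
  interpret S: prob_space "stream_space M" by (rule prob_space_stream_space)
  show ?case using S.emeasure_space_1 by (simp add: space_stream_space)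
next
  case (Cons A As)
  have A: "A \<in> sets M" and As: "set As \<subseteq> sets M" using Cons.prems by auto
  have meas: "scylinder (space M) (A # As) \<in> sets (stream_space M)"
    using Cons.prems by (intro sets_scylinder) auto
  have eq: "{x\<in>space (stream_space M). t ## x \<in> scylinder (space M) (A # As)}
      = (if t \<in> A then scylinder (space M) As else {})" if "t \<in> space M" for t
    using that scylinder_streams[of "space M" As] by (auto simp: space_stream_space streams_Stream)
  have eq2: "t ## x \<in> scylinder (space M) (A # As) \<longleftrightarrow> t \<in> A \<and> x \<in> scylinder (space M) As"
    if "t \<in> space M" for t x
    using that scylinder_streams[of "space M" As] by (auto simp: streams_Stream)
  have "emeasure (stream_space M) (scylinder (space M) (A # As))
     = (\<integral>\<^sup>+t. emeasure (stream_space M) {x\<in>space (stream_space M). t ## x \<in> scylinder (space M) (A # As)} \<partial>M)"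
    by (rule emeasure_stream_space[OF meas])
  also have "\<dots> = (\<integral>\<^sup>+t. emeasure (stream_space M) (scylinder (space M) As) * indicator A t \<partial>M)"
    apply (rule nn_integral_cong)
    apply (subst eq, assumption)
    apply (auto split: split_indicator)
    done
  also have "\<dots> = emeasure (stream_space M) (scylinder (space M) As) * emeasure M A"
    using A by (simp add: nn_integral_cmult_indicator)
  finally show ?case using Cons.hyps[OF As] by (simp add: mult.commute)
qed

lemma scylinder_UNIV_vimage:
  "smap f -` scylinder UNIV As = scylinder UNIV (map (\<lambda>A. f -` A) As)"
  by (induct As) auto

lemma stream_space_map_pmf:
  "stream_space (measure_pmf (map_pmf f p)) =
     distr (stream_space (measure_pmf p)) (stream_space (measure_pmf (map_pmf f p))) (smap f)"
  (is "?L = ?R")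
proof (rule stream_space_eq_scylinder[where S="measure_pmf (map_pmf f p)" and G=UNIV and C="{UNIV}"])
  interpret P: prob_space "measure_pmf p" by (rule prob_space_measure_pmf)
  interpret Q: prob_space "measure_pmf (map_pmf f p)" by (rule prob_space_measure_pmf)
  have fm: "smap f \<in> measurable (stream_space (measure_pmf p)) (stream_space (measure_pmf (map_pmf f p)))"
    by (intro measurable_smap) simp
  show "prob_space ?L" by (rule prob_space.prob_space_stream_space[OF prob_space_measure_pmf])
  show "prob_space ?R" by (intro prob_space.prob_space_distr[OF prob_space.prob_space_stream_space[OF prob_space_measure_pmf]] fm)
  show "Int_stable UNIV" by (simp add: Int_stable_def)
  show "sets (measure_pmf (map_pmf f p)) = sets (sigma (space (measure_pmf (map_pmf f p))) UNIV)"
    by (simp, metis Pow_UNIV sigma_algebra.sigma_sets_eq sigma_algebra_Pow)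
  show "countable {UNIV}" "{UNIV} \<subseteq> UNIV" "\<Union>{UNIV} = space (measure_pmf (map_pmf f p))"
    "UNIV \<subseteq> Pow (space (measure_pmf (map_pmf f p)))" by auto
  show "sets ?L = sets (stream_space (measure_pmf (map_pmf f p)))" by simp
  show "sets ?R = sets (stream_space (measure_pmf (map_pmf f p)))" by simp
  fix xs
  have "emeasure ?R (scylinder (space (measure_pmf (map_pmf f p))) xs)
      = emeasure (stream_space (measure_pmf p)) (smap f -` scylinder UNIV xs \<inter> space (stream_space (measure_pmf p)))"
    by (subst emeasure_distr[OF fm]) (auto intro!: sets_scylinder[where S="measure_pmf (map_pmf f p)", simplified])
  also have "\<dots> = emeasure (stream_space (measure_pmf p)) (scylinder (space (measure_pmf p)) (map (\<lambda>A. f -` A) xs))"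
    by (simp add: scylinder_UNIV_vimage space_stream_space)
  also have "\<dots> = prod_list (map (emeasure (measure_pmf p)) (map (\<lambda>A. f -` A) xs))"
    by (rule prob_space.emeasure_scylinder[OF prob_space_measure_pmf]) simp
  also have "\<dots> = prod_list (map (emeasure (measure_pmf (map_pmf f p))) xs)"
    by (induct xs) simp_all
  also have "\<dots> = emeasure ?L (scylinder (space (measure_pmf (map_pmf f p))) xs)"
    by (rule prob_space.emeasure_scylinder[OF prob_space_measure_pmf, symmetric]) simp
  finally show "emeasure ?L (scylinder (space (measure_pmf (map_pmf f p))) xs) =
         emeasure ?R (scylinder (space (measure_pmf (map_pmf f p))) xs)" by simp
qed

lemma AE_streams_set_pmf:
  "AE w in stream_space (measure_pmf p). w \<in> streams (set_pmf p)"
proof -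
  interpret P: prob_space "measure_pmf p" by (rule prob_space_measure_pmf)
  have "AE w in stream_space (measure_pmf p). stream_all (\<lambda>x. x \<in> set_pmf p) w"
    by (rule prob_space.AE_stream_all[OF prob_space_measure_pmf]) (auto simp: AE_measure_pmf)
  then show ?thesis by (simp add: stream_all_def streams_iff_sset subset_eq)
qed



lemma pred_snth_eq:
  "Measurable.pred (stream_space (measure_pmf p)) (\<lambda>w. w !! m = x)"
  by (rule pred_sets1[where M="measure_pmf p" and P="\<lambda>y. y = x" and f="\<lambda>w. w !! m"]) simp_all

lemma stream_hits:
  assumes x: "x \<in> set_pmf p"
  shows "AE w in stream_space (measure_pmf p). \<exists>m\<ge>n. w !! m = x"
proof -
  let ?S = "stream_space (measure_pmf p)"
  interpret S: prob_space ?S by (rule prob_space.prob_space_stream_space[OF prob_space_measure_pmf])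
  note [measurable] = pred_snth_eq
  have meas0: "{w \<in> space ?S. \<forall>m. w !! m \<noteq> x} \<in> sets ?S" by measurable
  define c where "c = S.prob {w \<in> space ?S. \<forall>m. w !! m \<noteq> x}"
  have "ennreal c = (\<integral>\<^sup>+t. S.prob {w \<in> space ?S. \<forall>m. (t ## w) !! m \<noteq> x} \<partial>measure_pmf p)"
    unfolding c_def by (rule prob_space.prob_stream_space[OF prob_space_measure_pmf meas0])
  also have "\<dots> = (\<integral>\<^sup>+t. ennreal c * indicator (- {x}) t \<partial>measure_pmf p)"
  proof (intro nn_integral_cong)
    fix t
    have "(\<forall>m. (t ## w) !! m \<noteq> x) \<longleftrightarrow> t \<noteq> x \<and> (\<forall>m. w !! m \<noteq> x)" for w
      by (metis Stream_snth old.nat.exhaust old.nat.simps(4) old.nat.simps(5))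
    then have "{w \<in> space ?S. \<forall>m. (t ## w) !! m \<noteq> x} = (if t = x then {} else {w \<in> space ?S. \<forall>m. w !! m \<noteq> x})"
      by auto
    note seteq = this
    show "ennreal (S.prob {w \<in> space ?S. \<forall>m. (t ## w) !! m \<noteq> x}) = ennreal c * indicator (- {x}) t"
      unfolding seteq by (cases "t = x") (simp_all add: c_def)
  qed
  also have "\<dots> = ennreal c * emeasure (measure_pmf p) (- {x})"
    by (simp add: nn_integral_cmult_indicator)
  also have "emeasure (measure_pmf p) (- {x}) = ennreal (1 - pmf p x)"
    by (simp add: measure_pmf.emeasure_eq_measure measure_pmf.prob_compl[of "{x}", simplified] measure_pmf_single Compl_eq_Diff_UNIV)
  finally have eq: "ennreal c = ennreal (c * (1 - pmf p x))"
    using pmf_le_1[of p x] by (simp add: c_def ennreal_mult)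
  have c0: "c \<ge> 0" unfolding c_def by simp
  have q: "pmf p x > 0" using x by (simp add: pmf_positive)
  have "c * (1 - pmf p x) \<ge> 0" using c0 pmf_le_1[of p x] by simp
  then have "c = c * (1 - pmf p x)" using eq c0 by simp
  then have "c * pmf p x = 0" by (simp add: algebra_simps)
  then have c: "c = 0" using q by simp
  have base: "AE w in ?S. \<exists>m. w !! m = x"
    by (subst AE_iff_measurable[OF _ refl]) (use meas0 c in \<open>auto simp: c_def S.emeasure_eq_measure\<close>)
  show ?thesis
  proof (induct n)
    case 0 then show ?case using base by simp
  next
    case (Suc n)
    have "(\<exists>m\<ge>Suc n. (t ## w) !! m = x) \<longleftrightarrow> (\<exists>m\<ge>n. w !! m = x)" for t w
      by (metis Suc_le_D Suc_le_mono Stream_snth old.nat.simps(5))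
    then show ?case
      by (subst prob_space.AE_stream_space[OF prob_space_measure_pmf]) (auto intro: Suc)
  qed
qed

lemma meas_stake:
  assumes S: "countable S"
  shows "{w \<in> streams S. F (stake k w)} \<in> sets (stream_space (measure_pmf p))"
proof -
  let ?L = "{xs \<in> lists S. length xs = k \<and> F xs}"
  note [measurable] = pred_snth_eq
  have eq: "{w \<in> streams S. F (stake k w)} = streams S \<inter> (\<Union>xs\<in>?L. {w \<in> space (stream_space (measure_pmf p)). \<forall>i<k. w !! i = xs ! i})"
  proof (safe, goal_cases)
    case (1 w)
    have "stake k w \<in> lists S" using 1 by (auto simp: in_set_conv_nth streams_iff_snth)
    then show ?case using 1
      by (auto simp: space_stream_space streams_iff_snth intro!: bexI[where x="stake k w"])
  next
    case (2 w xs)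
    then have "stake k w = xs" by (auto intro!: nth_equalityI)
    then show ?case using 2 by simp
  qed
  have "countable ?L" using S by (auto intro: countable_subset[OF _ countable_lists[OF S]])
  moreover have "streams S \<in> sets (stream_space (measure_pmf p))" by (rule streams_sets) simp
  ultimately show ?thesis unfolding eq
    by (intro sets.Int sets.countable_UN'') auto
qed



context group begin
lemma sym_from_map:
  assumes "set_pmf \<nu> \<subseteq> carrier G" "map_pmf (\<lambda>x. inv x) \<nu> = \<nu>"
  shows "symmetric_pmf G \<nu>"
  unfolding symmetric_pmf_def
proof
  fix g assume g: "g \<in> carrier G"
  have inj: "inj_on (\<lambda>x. inv x) (set_pmf \<nu>)"
    using assms(1) by (intro inj_onI) (metis inv_inv subsetD)
  show "pmf \<nu> g = pmf \<nu> (inv g)"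
  proof (cases "g \<in> set_pmf \<nu>")
    case True
    have "pmf \<nu> (inv g) = pmf (map_pmf (\<lambda>x. inv x) \<nu>) (inv g)" using assms(2) by simp
    also have "\<dots> = pmf \<nu> g" by (rule pmf_map_inj[OF inj True])
    finally show ?thesis by simp
  next
    case False
    have "inv g \<notin> set_pmf \<nu>"
    proof
      assume "inv g \<in> set_pmf \<nu>"
      then have "inv (inv g) \<in> set_pmf (map_pmf (\<lambda>x. inv x) \<nu>)" by simp
      then show False using False g assms(2) by simp
    qed
    then show ?thesis using False by (simp add: set_pmf_iff)
  qed
qed

lemma map_from_sym:
  assumes "set_pmf \<nu> \<subseteq> carrier G" "symmetric_pmf G \<nu>"
  shows "map_pmf (\<lambda>x. inv x) \<nu> = \<nu>"
proof (rule pmf_eqI)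
  have inj: "inj_on (\<lambda>x. inv x) (set_pmf \<nu>)"
    using assms(1) by (intro inj_onI) (metis inv_inv subsetD)
  fix y
  show "pmf (map_pmf (\<lambda>x. inv x) \<nu>) y = pmf \<nu> y"
  proof (cases "y \<in> (\<lambda>x. inv x) ` set_pmf \<nu>")
    case True
    then obtain x where x: "x \<in> set_pmf \<nu>" "y = inv x" by auto
    then have xc: "x \<in> carrier G" using assms(1) by auto
    have "pmf (map_pmf (\<lambda>x. inv x) \<nu>) y = pmf \<nu> x" unfolding x(2) by (rule pmf_map_inj[OF inj x(1)])
    also have "\<dots> = pmf \<nu> (inv x)" using assms(2) xc unfolding symmetric_pmf_def by blast
    also have "\<dots> = pmf \<nu> y" using x(2) by simp
    finally show ?thesis .
  next
    case False
    then have "y \<notin> set_pmf (map_pmf (\<lambda>x. inv x) \<nu>)" by simp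
    then have l: "pmf (map_pmf (\<lambda>x. inv x) \<nu>) y = 0" by (metis set_pmf_iff)
    have "y \<notin> set_pmf \<nu>"
    proof
      assume y: "y \<in> set_pmf \<nu>"
      then have yc: "y \<in> carrier G" using assms(1) by auto
      have "pmf \<nu> y = pmf \<nu> (inv y)" using assms(2) yc unfolding symmetric_pmf_def by blast
      then have "inv y \<in> set_pmf \<nu>" using y by (metis set_pmf_iff)
      then have "inv (inv y) \<in> (\<lambda>x. inv x) ` set_pmf \<nu>" by blast
      then show False using False yc by simp
    qed
    then show ?thesis using l by (simp add: set_pmf_iff)
  qed
qed

end

lemma map_Not_bernoulli_half: "map_pmf Not (bernoulli_pmf (1/2)) = bernoulli_pmf (1/2)"
proof (rule pmf_eqI)
  fix b :: bool
  have "pmf (map_pmf Not (bernoulli_pmf (1/2))) (Not (Not b)) = pmf (bernoulli_pmf (1/2)) (Not b)"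
    by (rule pmf_map_inj') (simp add: inj_def)
  then show "pmf (map_pmf Not (bernoulli_pmf (1/2))) b = pmf (bernoulli_pmf (1/2)) b" by simp
qed

context normal
begin

lemma coset_eq_of_mem:
  assumes "c \<in> carrier (G Mod H)" "x \<in> c" shows "H #> x = c"
proof -
  obtain a where a: "a \<in> carrier G" "c = H #> a" using assms(1) by (auto simp: carrier_FactGroup)
  have "x \<in> H #> a" using a(2) assms(2) by simp
  then have "H #> a = H #> x" using repr_independence a(1) subgroup_axioms by blast
  then show ?thesis using a(2) by simp
qed

lemma coset_sub: "c \<in> carrier (G Mod H) \<Longrightarrow> c \<subseteq> carrier G"
  by (auto simp: carrier_FactGroup r_coset_def)

lemma coset_ne: "c \<in> carrier (G Mod H) \<Longrightarrow> c \<noteq> {}"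
  using rcos_self subgroup_axioms by (auto simp: carrier_FactGroup)

lemma pi_hom: "group_hom G (G Mod H) (\<lambda>x. H #> x)"
  using r_coset_hom_Mod factorgroup_is_group is_group by (simp add: group_hom_def group_hom_axioms_def)

lemma lift_pmf:
  assumes cG: "countable (carrier G)"
    and sub: "set_pmf \<mu> \<subseteq> carrier (G Mod H)" and sym: "symmetric_pmf (G Mod H) \<mu>"
    and gen: "generate (G Mod H) (set_pmf \<mu>) = carrier (G Mod H)"
  shows "\<exists>\<nu>. set_pmf \<nu> \<subseteq> carrier G \<and> symmetric_pmf G \<nu> \<and> generate G (set_pmf \<nu>) = carrier G
           \<and> map_pmf (\<lambda>x. H #> x) \<nu> = \<mu>"
proof -
  let ?\<pi> = "\<lambda>x. H #> x"
  let ?K = "G Mod H"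
  interpret K: group ?K by (rule factorgroup_is_group)
  interpret hom: group_hom G ?K ?\<pi> by (rule pi_hom)
  define \<kappa> where "\<kappa> c = map_pmf (from_nat_into c) (geometric_pmf (1/2))" for c :: "'a set"
  define \<nu>0 where "\<nu>0 = bind_pmf \<mu> \<kappa>"
  define \<nu> where "\<nu> = bind_pmf (bernoulli_pmf (1/2)) (\<lambda>b. if b then \<nu>0 else map_pmf (\<lambda>x. inv x) \<nu>0)"
  have cc: "countable c" if "c \<in> carrier ?K" for c
    using countable_subset[OF coset_sub[OF that] cG] .
  have setk: "set_pmf (\<kappa> c) = c" if "c \<in> carrier ?K" for c
    using cc[OF that] coset_ne[OF that] by (simp add: \<kappa>_def set_pmf_geometric)
  have set0: "set_pmf \<nu>0 = \<Union> (set_pmf \<mu>)"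
    using sub setk by (auto simp: \<nu>0_def)
  have set0c: "set_pmf \<nu>0 \<subseteq> carrier G" using set0 sub coset_sub by auto
  have setnu: "set_pmf \<nu> = set_pmf \<nu>0 \<union> (\<lambda>x. inv x) ` set_pmf \<nu>0"
    by (auto simp: \<nu>_def set_pmf_bernoulli split: if_splits)
  have setnuc: "set_pmf \<nu> \<subseteq> carrier G" using setnu set0c by auto
  have map0: "map_pmf ?\<pi> \<nu>0 = \<mu>"
  proof -
    have "map_pmf ?\<pi> \<nu>0 = bind_pmf \<mu> (\<lambda>c. map_pmf ?\<pi> (\<kappa> c))" by (simp add: \<nu>0_def map_bind_pmf)
    also have "\<dots> = bind_pmf \<mu> return_pmf"
    proof (rule bind_pmf_cong[OF refl])
      fix c assume c: "c \<in> set_pmf \<mu>"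
      then have cK: "c \<in> carrier ?K" using sub by auto
      have "map_pmf ?\<pi> (\<kappa> c) = map_pmf (\<lambda>_. c) (\<kappa> c)"
        by (rule map_pmf_cong[OF refl]) (use setk[OF cK] coset_eq_of_mem[OF cK] in auto)
      then show "map_pmf ?\<pi> (\<kappa> c) = return_pmf c" by simp
    qed
    finally show ?thesis by (simp add: bind_return_pmf')
  qed
  have invmu: "map_pmf (\<lambda>x. inv\<^bsub>?K\<^esub> x) \<mu> = \<mu>" by (rule K.map_from_sym[OF sub sym])
  have map1: "map_pmf ?\<pi> (map_pmf (\<lambda>x. inv x) \<nu>0) = \<mu>"
  proof -
    have "map_pmf ?\<pi> (map_pmf (\<lambda>x. inv x) \<nu>0) = map_pmf (\<lambda>x. inv\<^bsub>?K\<^esub> (?\<pi> x)) \<nu>0"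
      unfolding map_pmf_comp by (rule map_pmf_cong[OF refl]) (use set0c in auto)
    also have "\<dots> = map_pmf (\<lambda>x. inv\<^bsub>?K\<^esub> x) (map_pmf ?\<pi> \<nu>0)" by (simp add: map_pmf_comp)
    finally show ?thesis using map0 invmu by simp
  qed
  have mapnu: "map_pmf ?\<pi> \<nu> = \<mu>"
    unfolding \<nu>_def map_bind_pmf by (simp add: map0 map1 if_distrib cong: if_cong)
  have invnu: "map_pmf (\<lambda>x. inv x) \<nu> = \<nu>"
  proof -
    have ii: "map_pmf (\<lambda>x. inv x) (map_pmf (\<lambda>x. inv x) \<nu>0) = \<nu>0"
      unfolding map_pmf_comp by (subst map_pmf_cong[OF refl, where g="\<lambda>x. x"]) (use set0c in auto)
    have "map_pmf (\<lambda>x. inv x) \<nu> = bind_pmf (bernoulli_pmf (1/2)) (\<lambda>b. if b then map_pmf (\<lambda>x. inv x) \<nu>0 else \<nu>0)"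
      unfolding \<nu>_def map_bind_pmf by (simp add: ii if_distrib cong: if_cong)
    also have "\<dots> = bind_pmf (map_pmf Not (bernoulli_pmf (1/2))) (\<lambda>b. if b then \<nu>0 else map_pmf (\<lambda>x. inv x) \<nu>0)"
      by (simp add: bind_map_pmf, intro bind_pmf_cong[OF refl], simp)
    also have "\<dots> = \<nu>" by (simp add: map_Not_bernoulli_half \<nu>_def)
    finally show ?thesis .
  qed
  have symnu: "symmetric_pmf G \<nu>" by (rule sym_from_map[OF setnuc invnu])
  have genG: "generate G (set_pmf \<nu>) = carrier G"
  proof
    show "generate G (set_pmf \<nu>) \<subseteq> carrier G" using generate_in_carrier[OF setnuc] by blast
  next
    let ?Gen = "generate G (set_pmf \<nu>)"
    have sgrp: "subgroup ?Gen G" by (rule generate_is_subgroup[OF setnuc])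
    have incl_nu: "x \<in> ?Gen" if "c \<in> set_pmf \<mu>" "x \<in> c" for c x
    proof -
      have "x \<in> set_pmf \<nu>0" using that set0 by blast
      then have "x \<in> set_pmf \<nu>" using setnu by blast
      then show ?thesis by (rule generate.incl)
    qed
    have mu_ne: "set_pmf \<mu> \<noteq> {}" by (rule set_pmf_not_empty)
    have cosets: "c \<subseteq> ?Gen" if "c \<in> generate ?K (set_pmf \<mu>)" for c
      using that
    proof induct
      case one
      obtain c0 where c0: "c0 \<in> set_pmf \<mu>" using mu_ne by auto
      then have c0K: "c0 \<in> carrier ?K" using sub by auto
      obtain x where x: "x \<in> c0" using coset_ne[OF c0K] by auto
      have xc: "x \<in> carrier G" using x coset_sub[OF c0K] by auto
      have xg: "x \<in> ?Gen" using incl_nu[OF c0 x] .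
      have c0eq: "H #> x = c0" by (rule coset_eq_of_mem[OF c0K x])
      show ?case
      proof
        fix h assume h: "h \<in> \<one>\<^bsub>?K\<^esub>"
        then have hH: "h \<in> H" by (simp only: one_FactGroup)
        have hc: "h \<in> carrier G" using hH subset by blast
        have "h \<otimes> x \<in> H #> x" using hH unfolding r_coset_def by blast
        then have "h \<otimes> x \<in> c0" unfolding c0eq .
        then have hx: "h \<otimes> x \<in> ?Gen" by (rule incl_nu[OF c0])
        have "(h \<otimes> x) \<otimes> inv x = h \<otimes> (x \<otimes> inv x)" by (rule m_assoc[OF hc xc inv_closed[OF xc]])
        also have "\<dots> = h" by (simp only: r_inv[OF xc] r_one[OF hc])
        finally have eqh: "(h \<otimes> x) \<otimes> inv x = h" .
        have "(h \<otimes> x) \<otimes> inv x \<in> ?Gen"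
          by (intro subgroup.m_closed[OF sgrp] hx subgroup.m_inv_closed[OF sgrp xg])
        then show "h \<in> ?Gen" unfolding eqh .
      qed
    next
      case (incl c)
      then show ?case using incl_nu by blast
    next
      case (inv c)
      then have cK: "c \<in> carrier ?K" using sub by auto
      have "inv\<^bsub>?K\<^esub> c = set_inv c" by (rule inv_FactGroup[OF cK])
      moreover have "c \<subseteq> ?Gen" using inv incl_nu by blast
      moreover have "set_inv c \<subseteq> ?Gen"
      proof
        fix y assume "y \<in> set_inv c"
        then obtain x where x: "x \<in> c" "y = inv x" unfolding SET_INV_def by blast
        show "y \<in> ?Gen" unfolding x(2) by (rule subgroup.m_inv_closed[OF sgrp]) (use x(1) \<open>c \<subseteq> ?Gen\<close> in blast)
      qed
      ultimately show ?case by simp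
    next
      case (eng c1 c2)
      show ?case
      proof
        fix y assume "y \<in> c1 \<otimes>\<^bsub>?K\<^esub> c2"
        then have "y \<in> c1 <#> c2" by simp
        then obtain x1 x2 where x: "x1 \<in> c1" "x2 \<in> c2" "y = x1 \<otimes> x2" unfolding set_mult_def by blast
        have "x1 \<in> ?Gen" "x2 \<in> ?Gen" using x eng.hyps(2,4) by blast+
        then show "y \<in> ?Gen" unfolding x(3) by (rule subgroup.m_closed[OF sgrp])
      qed
    qed
    show "carrier G \<subseteq> ?Gen"
    proof
      fix g assume g: "g \<in> carrier G"
      have "?\<pi> g \<in> carrier ?K" using g by (auto simp: carrier_FactGroup)
      then have "?\<pi> g \<subseteq> ?Gen" using cosets gen by auto
      then show "g \<in> ?Gen" using rcos_self[OF g subgroup_axioms] by auto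
    qed
  qed
  show ?thesis using setnuc symnu genG mapnu by blast
qed

end


fun lprod :: "('a, 'b) monoid_scheme \<Rightarrow> 'a list \<Rightarrow> 'a" where
  "lprod G [] = \<one>\<^bsub>G\<^esub>"
| "lprod G [x] = x"
| "lprod G (x # y # xs) = x \<otimes>\<^bsub>G\<^esub> lprod G (y # xs)"

lemma lprod_Cons: "ys \<noteq> [] \<Longrightarrow> lprod G (x # ys) = x \<otimes>\<^bsub>G\<^esub> lprod G ys"
  by (cases ys) auto

lemma lprod_closed: "monoid G \<Longrightarrow> set xs \<subseteq> carrier G \<Longrightarrow> lprod G xs \<in> carrier G"
  by (induct G xs rule: lprod.induct) (auto intro: monoid.m_closed)

lemma lprod_append:
  assumes "monoid G" "xs \<noteq> []" "ys \<noteq> []" "set xs \<subseteq> carrier G" "set ys \<subseteq> carrier G"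
  shows "lprod G (xs @ ys) = lprod G xs \<otimes>\<^bsub>G\<^esub> lprod G ys"
  using assms(2,4)
proof (induct xs)
  case Nil then show ?case by simp
next
  case (Cons x xs)
  show ?case
  proof (cases "xs = []")
    case True then show ?thesis using assms(3) by (simp add: lprod_Cons)
  next
    case False
    have "lprod G ((x # xs) @ ys) = x \<otimes>\<^bsub>G\<^esub> lprod G (xs @ ys)" using assms(3) by (simp add: lprod_Cons)
    also have "\<dots> = x \<otimes>\<^bsub>G\<^esub> (lprod G xs \<otimes>\<^bsub>G\<^esub> lprod G ys)" using Cons False by simp
    also have "\<dots> = (x \<otimes>\<^bsub>G\<^esub> lprod G xs) \<otimes>\<^bsub>G\<^esub> lprod G ys"
    proof -
      have c1: "x \<in> carrier G" "lprod G xs \<in> carrier G" "lprod G ys \<in> carrier G"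
        using Cons.prems assms lprod_closed[OF assms(1)] by auto
      show ?thesis by (rule monoid.m_assoc[OF assms(1) c1, symmetric])
    qed
    also have "\<dots> = lprod G (x # xs) \<otimes>\<^bsub>G\<^esub> lprod G ys" using False by (simp add: lprod_Cons)
    finally show ?thesis .
  qed
qed

lemma sg_char:
  assumes "monoid G" "A \<subseteq> carrier G"
  shows "a \<in> semigroup_gen G A \<longleftrightarrow> (\<exists>xs. xs \<noteq> [] \<and> set xs \<subseteq> A \<and> a = lprod G xs)"
proof
  assume "a \<in> semigroup_gen G A"
  then show "\<exists>xs. xs \<noteq> [] \<and> set xs \<subseteq> A \<and> a = lprod G xs"
  proof induct
    case (sg_incl a) then show ?case by (intro exI[of _ "[a]"]) auto
  next
    case (sg_mult a b)
    then obtain xs ys where "xs \<noteq> []" "set xs \<subseteq> A" "a = lprod G xs" "ys \<noteq> []" "set ys \<subseteq> A" "b = lprod G ys"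
      by blast
    then show ?case using assms
      by (intro exI[of _ "xs @ ys"]) (auto simp: lprod_append)
  qed
next
  assume "\<exists>xs. xs \<noteq> [] \<and> set xs \<subseteq> A \<and> a = lprod G xs"
  then obtain xs where xs: "xs \<noteq> []" "set xs \<subseteq> A" "a = lprod G xs" by blast
  have "lprod G xs \<in> semigroup_gen G A" using xs(1,2)
  proof (induct xs)
    case Nil then show ?case by simp
  next
    case (Cons x xs)
    then show ?case
      by (cases "xs = []") (auto simp: lprod_Cons intro: semigroup_gen.intros)
  qed
  then show "a \<in> semigroup_gen G A" using xs(3) by simp
qed

lemma list_in_image_cond:
  "set xs \<subseteq> {f m | m. n \<le> (m::nat)} \<Longrightarrow> \<exists>idx. xs = map f idx \<and> (\<forall>i\<in>set idx. n \<le> i)"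
proof (induct xs)
  case Nil then show ?case by simp
next
  case (Cons x xs)
  then obtain idx where "xs = map f idx" "\<forall>i\<in>set idx. n \<le> i" by auto
  moreover obtain m where "x = f m" "n \<le> m" using Cons.prems by auto
  ultimately show ?case by (intro exI[of _ "m # idx"]) auto
qed

lemma sg_rwalk_char:
  assumes "monoid K" "\<forall>i. w !! i \<in> carrier K"
  shows "g \<in> semigroup_gen K {rwalk K w m | m. n \<le> m} \<longleftrightarrow>
    (\<exists>idx. idx \<noteq> [] \<and> (\<forall>i\<in>set idx. n \<le> i) \<and> g = lprod K (map (rwalk K w) idx))"
proof -
  have sub: "{rwalk K w m | m. n \<le> m} \<subseteq> carrier K" using rwalk_carrier[OF assms] by auto
  show ?thesis
    unfolding sg_char[OF assms(1) sub]
  proof safe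
    fix xs assume "xs \<noteq> []" "set xs \<subseteq> {rwalk K w m | m. n \<le> m}"
    then obtain idx where idx: "xs = map (rwalk K w) idx" "\<forall>i\<in>set idx. n \<le> i"
      using list_in_image_cond[of xs "rwalk K w" n] by blast
    have "idx \<noteq> []" using idx(1) \<open>xs \<noteq> []\<close> by auto
    then show "\<exists>idx. idx \<noteq> [] \<and> (\<forall>i\<in>set idx. n \<le> i) \<and> lprod K xs = lprod K (map (rwalk K w) idx)"
      using idx by blast
  next
    fix idx assume "idx \<noteq> []" "\<forall>i\<in>set idx. n \<le> i"
    then show "\<exists>xs. xs \<noteq> [] \<and> set xs \<subseteq> {rwalk K w m |m. n \<le> m} \<and>
                 lprod K (map (rwalk K w) idx) = lprod K xs"
      by (intro exI[of _ "map (rwalk K w) idx"]) auto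
  qed
qed

lemma rwalk_stake:
  "m \<le> k \<Longrightarrow> rwalk K (stake k w @- u) m = rwalk K w m"
  by (induct m) (auto simp: shift_snth_less)

lemma meas_sg_event:
  assumes S: "countable S" "S \<subseteq> carrier K" and K: "monoid K" "countable (carrier K)"
  shows "{w \<in> streams S. semigroup_gen K {rwalk K w m | m. n \<le> m} = carrier K}
           \<in> sets (stream_space (measure_pmf p))"
proof -
  let ?M = "stream_space (measure_pmf p)"
  define F where "F g idx l = (g = lprod K (map (rwalk K (l @- sconst undefined)) idx))" for g idx l
  define I where "I = {idx :: nat list. idx \<noteq> [] \<and> (\<forall>i\<in>set idx. n \<le> i)}"
  have wc: "\<forall>i. w !! i \<in> carrier K" if "w \<in> streams S" for w
    using that S(2) by (auto simp: streams_iff_snth)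
  have Eg: "{w \<in> streams S. g \<in> semigroup_gen K {rwalk K w m | m. n \<le> m}}
      = (\<Union>idx\<in>I. {w \<in> streams S. F g idx (stake (Max (set idx)) w)})" for g
  proof -
    have "F g idx (stake (Max (set idx)) w) \<longleftrightarrow> g = lprod K (map (rwalk K w) idx)" if "idx \<in> I" for idx w
    proof -
      have meq: "map (rwalk K (stake (Max (set idx)) w @- sconst undefined)) idx = map (rwalk K w) idx"
        by (intro map_cong[OF refl] rwalk_stake Max_ge) auto
      show ?thesis unfolding F_def meq by (rule refl)
    qed
    note Feq = this
    show ?thesis
    proof (rule Set.set_eqI)
      fix w
      show "w \<in> {w \<in> streams S. g \<in> semigroup_gen K {rwalk K w m | m. n \<le> m}} \<longleftrightarrow>
            w \<in> (\<Union>idx\<in>I. {w \<in> streams S. F g idx (stake (Max (set idx)) w)})"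
      proof (cases "w \<in> streams S")
        case True
        have "g \<in> semigroup_gen K {rwalk K w m | m. n \<le> m} \<longleftrightarrow> (\<exists>idx\<in>I. g = lprod K (map (rwalk K w) idx))"
          unfolding sg_rwalk_char[OF K(1) wc[OF True]] I_def by blast
        also have "\<dots> \<longleftrightarrow> (\<exists>idx\<in>I. F g idx (stake (Max (set idx)) w))"
          using Feq by blast
        finally show ?thesis using True by blast
      next
        case False then show ?thesis by blast
      qed
    qed
  qed
  have cI: "countable I" by simp
  have eq: "{w \<in> streams S. semigroup_gen K {rwalk K w m | m. n \<le> m} = carrier K}
      = streams S \<inter> (\<Inter>g\<in>carrier K. {w \<in> streams S. g \<in> semigroup_gen K {rwalk K w m | m. n \<le> m}})"
  proof -
    have "semigroup_gen K {rwalk K w m | m. n \<le> m} \<subseteq> carrier K" if "w \<in> streams S" for w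
      by (rule sg_subset[OF K(1)]) (use rwalk_carrier[OF K(1) wc[OF that]] in blast)
    note sub = this
    show ?thesis
    proof (rule Set.set_eqI)
      fix w
      show "w \<in> {w \<in> streams S. semigroup_gen K {rwalk K w m | m. n \<le> m} = carrier K} \<longleftrightarrow>
        w \<in> streams S \<inter> (\<Inter>g\<in>carrier K. {w \<in> streams S. g \<in> semigroup_gen K {rwalk K w m | m. n \<le> m}})"
      proof (cases "w \<in> streams S")
        case True
        have "semigroup_gen K {rwalk K w m | m. n \<le> m} = carrier K \<longleftrightarrow>
              carrier K \<subseteq> semigroup_gen K {rwalk K w m | m. n \<le> m}"
          using sub[OF True] by blast
        then show ?thesis using True by auto
      next
        case False then show ?thesis by simp
      qed
    qed
  qed
  have "streams S \<in> sets ?M" by (rule streams_sets) simp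
  moreover have "(\<Inter>g\<in>carrier K. {w \<in> streams S. g \<in> semigroup_gen K {rwalk K w m | m. n \<le> m}}) \<in> sets ?M"
  proof (rule sets.countable_INT'')
    show "UNIV \<in> sets ?M" using sets.top[of ?M] by (simp add: space_stream_space)
    show "countable (carrier K)" by (rule K(2))
    fix g
    show "{w \<in> streams S. g \<in> semigroup_gen K {rwalk K w m | m. n \<le> m}} \<in> sets ?M"
      unfolding Eg by (intro sets.countable_UN'' cI meas_stake S(1))
  qed
  ultimately show ?thesis unfolding eq by (rule sets.Int)
qed



lemma smap_meas: "smap f \<in> measurable (stream_space (measure_pmf p)) (stream_space (measure_pmf q))"
  by (intro measurable_smap) simp

context normal
begin

lemma pointwise2:
  assumes tor: "torsion_subgroup G H"
    and wc: "\<forall>i. w !! i \<in> carrier G"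
    and V: "V \<subseteq> carrier G" "generate G V = carrier G"
    and hits: "\<forall>x\<in>V. \<exists>m\<ge>n. w !! m = x"
    and QK: "semigroup_gen (G Mod H) {rwalk (G Mod H) (smap (\<lambda>x. H #> x) w) m | m. n \<le> m} = carrier (G Mod H)"
  shows "semigroup_gen G {rwalk G w m | m. n \<le> m} = carrier G"
proof -
  let ?\<pi> = "\<lambda>x. H #> x"
  let ?K = "G Mod H"
  let ?A = "{rwalk G w m | m. n \<le> m}"
  let ?S = "semigroup_gen G ?A"
  have Ac: "?A \<subseteq> carrier G" using rwalk_carrier[OF monoid_axioms wc] by blast
  have Sc: "?S \<subseteq> carrier G" by (rule sg_subset[OF monoid_axioms Ac])
  have imgA: "?\<pi> ` ?A = {rwalk ?K (smap ?\<pi> w) m | m. n \<le> m}"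
    using rwalk_hom[OF pi_hom wc] by auto
  have "?\<pi> ` ?S = semigroup_gen ?K (?\<pi> ` ?A)" by (rule sg_hom_img[OF pi_hom Ac, symmetric])
  then have onto: "carrier ?K \<subseteq> ?\<pi> ` ?S" using QK imgA by simp
  have Smul: "a \<otimes> b \<in> ?S" if "a \<in> ?S" "b \<in> ?S" for a b
    using that by (rule semigroup_gen.sg_mult)
  have invS: "inv g \<in> ?S" if "g \<in> ?S" for g
    by (rule sg_inv_closed[OF tor Sc Smul onto that])
  have rwS: "rwalk G w m \<in> ?S" if "n \<le> m" for m
    using that by (intro semigroup_gen.sg_incl) blast
  have rc: "rwalk G w m \<in> carrier G" for m by (rule rwalk_carrier[OF monoid_axioms wc])
  have oneS: "\<one> \<in> ?S"
  proof -
    have "rwalk G w n \<otimes> inv (rwalk G w n) \<in> ?S" by (intro Smul rwS invS) simp_all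
    then show ?thesis using r_inv[OF rc[of n]] by (simp only:)
  qed
  have VS: "x \<in> ?S" if "x \<in> V" for x
  proof -
    have ex: "\<exists>m\<ge>n. w !! m = x" using hits that by (rule bspec)
    obtain m where m: "n \<le> m" "w !! m = x" using ex by auto
    have xc: "x \<in> carrier G" using that V(1) by blast
    have "inv (rwalk G w m) \<otimes> rwalk G w (Suc m) \<in> ?S" using m by (intro Smul invS rwS) simp_all
    also have "inv (rwalk G w m) \<otimes> rwalk G w (Suc m) = inv (rwalk G w m) \<otimes> (rwalk G w m \<otimes> x)"
      using m(2) by simp
    also have "\<dots> = (inv (rwalk G w m) \<otimes> rwalk G w m) \<otimes> x"
      by (rule m_assoc[symmetric]) (use rc[of m] xc in auto)
    also have "\<dots> = x" by (simp only: l_inv[OF rc[of m]] l_one[OF xc])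
    finally show ?thesis .
  qed
  have "generate G V \<subseteq> ?S"
  proof
    fix x assume "x \<in> generate G V" then show "x \<in> ?S"
    proof induct
      case one then show ?case by (rule oneS)
    next
      case (incl h) then show ?case by (rule VS)
    next
      case (inv h) then show ?case by (intro invS VS)
    next
      case (eng h1 h2) then show ?case using Smul by blast
    qed
  qed
  then show ?thesis using V(2) Sc by blast
qed

lemma dir2:
  assumes tor: "torsion_subgroup G H" and AR: "AR_group (G Mod H)"
  shows "AR_group G"
  unfolding AR_group_def
proof (intro allI impI)
  let ?\<pi> = "\<lambda>x. H #> x"
  let ?K = "G Mod H"
  interpret K: group ?K by (rule factorgroup_is_group)
  interpret hom: group_hom G ?K ?\<pi> by (rule pi_hom)
  fix \<nu> :: "'a pmf"
  assume "set_pmf \<nu> \<subseteq> carrier G \<and> symmetric_pmf G \<nu> \<and> generate G (set_pmf \<nu>) = carrier G"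
  then have sub: "set_pmf \<nu> \<subseteq> carrier G" and sym: "symmetric_pmf G \<nu>" and gen: "generate G (set_pmf \<nu>) = carrier G"
    by auto
  define \<mu> where "\<mu> = map_pmf ?\<pi> \<nu>"
  have subK: "set_pmf \<mu> \<subseteq> carrier ?K" using sub by (auto simp: \<mu>_def carrier_FactGroup)
  have "map_pmf (\<lambda>x. inv\<^bsub>?K\<^esub> x) \<mu> = map_pmf (\<lambda>x. ?\<pi> (inv x)) \<nu>"
    unfolding \<mu>_def map_pmf_comp by (rule map_pmf_cong[OF refl]) (use sub hom.hom_inv in blast)
  also have "\<dots> = map_pmf ?\<pi> (map_pmf (\<lambda>x. inv x) \<nu>)" by (simp add: map_pmf_comp)
  also have "\<dots> = \<mu>" unfolding \<mu>_def using map_from_sym[OF sub sym] by simp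
  finally have symK: "symmetric_pmf ?K \<mu>" by (rule K.sym_from_map[OF subK])
  have genK: "generate ?K (set_pmf \<mu>) = carrier ?K"
  proof -
    have "generate ?K (set_pmf \<mu>) = ?\<pi> ` generate G (set_pmf \<nu>)"
      unfolding \<mu>_def set_map_pmf by (rule hom.generate_img[OF sub])
    then show ?thesis using gen by (simp add: carrier_FactGroup)
  qed
  have ARK: "AR_pair ?K \<mu>" using AR subK symK genK unfolding AR_group_def by blast
  show "AR_pair G \<nu>"
    unfolding AR_pair_def
  proof (intro allI impI)
    fix n :: nat assume n: "n \<ge> 1"
    have "AE w' in stream_space (measure_pmf \<mu>).
        semigroup_gen ?K {rwalk ?K w' m | m. n \<le> m} = carrier ?K"
      using ARK n unfolding AR_pair_def by auto
    then have "AE w' in distr (stream_space (measure_pmf \<nu>)) (stream_space (measure_pmf \<mu>)) (smap ?\<pi>).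
        semigroup_gen ?K {rwalk ?K w' m | m. n \<le> m} = carrier ?K"
      unfolding \<mu>_def by (subst (asm) stream_space_map_pmf)
    then have ae1: "AE w in stream_space (measure_pmf \<nu>).
        semigroup_gen ?K {rwalk ?K (smap ?\<pi> w) m | m. n \<le> m} = carrier ?K"
      by (rule AE_distrD[OF smap_meas])
    have ae2: "AE w in stream_space (measure_pmf \<nu>). w \<in> streams (set_pmf \<nu>)"
      by (rule AE_streams_set_pmf)
    have ae3: "AE w in stream_space (measure_pmf \<nu>). \<forall>x\<in>set_pmf \<nu>. \<exists>m\<ge>n. w !! m = x"
      by (subst AE_ball_countable) (auto intro: stream_hits)
    show "AE w in stream_space (measure_pmf \<nu>). semigroup_gen G {rwalk G w m | m. n \<le> m} = carrier G"
      using ae1 ae2 ae3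
    proof eventually_elim
      case (elim w)
      have wc: "\<forall>i. w !! i \<in> carrier G" using elim(2) sub by (auto simp: streams_iff_snth)
      show ?case by (rule pointwise2[OF tor wc sub gen elim(3) elim(1)])
    qed
  qed
qed

lemma dir1:
  assumes cG: "countable (carrier G)" and AR: "AR_group G"
  shows "AR_group (G Mod H)"
  unfolding AR_group_def
proof (intro allI impI)
  let ?\<pi> = "\<lambda>x. H #> x"
  let ?K = "G Mod H"
  interpret K: group ?K by (rule factorgroup_is_group)
  interpret hom: group_hom G ?K ?\<pi> by (rule pi_hom)
  fix \<mu> :: "'a set pmf"
  assume "set_pmf \<mu> \<subseteq> carrier ?K \<and> symmetric_pmf ?K \<mu> \<and> generate ?K (set_pmf \<mu>) = carrier ?K"
  then have sub: "set_pmf \<mu> \<subseteq> carrier ?K" and sym: "symmetric_pmf ?K \<mu>" and gen: "generate ?K (set_pmf \<mu>) = carrier ?K"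
    by auto
  obtain \<nu> where nsub: "set_pmf \<nu> \<subseteq> carrier G" and nsym: "symmetric_pmf G \<nu>"
    and ngen: "generate G (set_pmf \<nu>) = carrier G" and nmap: "map_pmf ?\<pi> \<nu> = \<mu>"
    using lift_pmf[OF cG sub sym gen] by blast
  have ARG: "AR_pair G \<nu>" using AR nsub nsym ngen unfolding AR_group_def by blast
  have cK: "countable (carrier ?K)" using cG by (simp add: carrier_FactGroup)
  show "AR_pair ?K \<mu>"
    unfolding AR_pair_def
  proof (intro allI impI)
    fix n :: nat assume n: "n \<ge> 1"
    let ?P = "\<lambda>w'. w' \<in> streams (set_pmf \<mu>) \<longrightarrow> semigroup_gen ?K {rwalk ?K w' m | m. n \<le> m} = carrier ?K"
    have meas: "{w' \<in> space (stream_space (measure_pmf \<mu>)). ?P w'} \<in> sets (stream_space (measure_pmf \<mu>))"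
    proof -
      have "{w' \<in> space (stream_space (measure_pmf \<mu>)). ?P w'} =
         (space (stream_space (measure_pmf \<mu>)) - streams (set_pmf \<mu>)) \<union>
         {w' \<in> streams (set_pmf \<mu>). semigroup_gen ?K {rwalk ?K w' m | m. n \<le> m} = carrier ?K}"
        by (auto simp: space_stream_space)
      also have "\<dots> \<in> sets (stream_space (measure_pmf \<mu>))"
        by (intro sets.Un sets.Diff sets.top streams_sets meas_sg_event countable_set_pmf sub K.monoid_axioms cK) simp
      finally show ?thesis .
    qed
    have aeG: "AE w in stream_space (measure_pmf \<nu>). semigroup_gen G {rwalk G w m | m. n \<le> m} = carrier G"
      using ARG n unfolding AR_pair_def by auto
    have "AE w in stream_space (measure_pmf \<nu>). ?P (smap ?\<pi> w)"
      using aeG AE_streams_set_pmf[of \<nu>]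
    proof eventually_elim
      case (elim w)
      have wc: "\<forall>i. w !! i \<in> carrier G" using elim(2) nsub by (auto simp: streams_iff_snth)
      let ?A = "{rwalk G w m | m. n \<le> m}"
      have Ac: "?A \<subseteq> carrier G" using rwalk_carrier[OF monoid_axioms wc] by blast
      have imgA: "{rwalk ?K (smap ?\<pi> w) m | m. n \<le> m} = ?\<pi> ` ?A"
        using rwalk_hom[OF pi_hom wc] by auto
      have "semigroup_gen ?K {rwalk ?K (smap ?\<pi> w) m | m. n \<le> m} = ?\<pi> ` carrier G"
        unfolding imgA sg_hom_img[OF pi_hom Ac] elim(1) ..
      then show ?case by (simp add: carrier_FactGroup)
    qed
    then have "AE w' in distr (stream_space (measure_pmf \<nu>)) (stream_space (measure_pmf \<mu>)) (smap ?\<pi>). ?P w'"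
      by (subst AE_distr_iff[OF smap_meas meas])
    then have "AE w' in stream_space (measure_pmf \<mu>). ?P w'"
      unfolding nmap[symmetric] by (subst stream_space_map_pmf)
    then show "AE w' in stream_space (measure_pmf \<mu>). semigroup_gen ?K {rwalk ?K w' m | m. n \<le> m} = carrier ?K"
      using AE_streams_set_pmf[of \<mu>] by eventually_elim auto
  qed
qed

end

theorem theorem2:
  fixes G :: "('a, 'b) monoid_scheme" and H :: "'a set"
  assumes "group G"
    and "countable (carrier G)"
    and "H \<lhd> G"
    and "torsion_subgroup G H"
  shows "AR_group (G Mod H) \<longleftrightarrow> AR_group G"
proof -
  interpret normal H G by fact
  show ?thesis using dir1[OF assms(2)] dir2[OF assms(4)] by blast
qed


end
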